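(* Let $\mathrm{CNN}_\theta = \mathcal{L}_{l}\circ\cdots\circ\mathcal{L}_{p+1}\circ\mathcal{F}\circ\mathcal{G}_p\circ\cdots\circ\mathcal{G}_1$ be a 1D convolutional neural network as described in the context, and let $\gamma>0$. Suppose that for every layer $i=1,\dots,l$ there exist matrices $Q_i\in\mathbb{S}^{n_i}$, $S_i\in\mathbb{R}^{n_i\times n_{i-1}}$, $R_i\in\mathbb{S}^{n_{i-1}}$ such that for all pairs of layer inputs $w_a^{i-1},w_b^{i-1}$ (with corresponding layer outputs $w_a^i,w_b^i$) $$\begin{bmatrix}\underline{w}_a^i-\underline{w}_b^i\\ \underline{w}_a^{i-1}-\underline{w}_b^{i-1}\end{bmatrix}^\top\begin{bmatrix}Q_i & S_i\\ S_i^\top & R_i\end{bmatrix}\begin{bmatrix}\underline{w}_a^i-\underline{w}_b^i\\ \underline{w}_a^{i-1}-\underline{w}_b^{i-1}\end{bmatrix}\ge 0 ,$$ and suppose in addition that the block-tridiagonal matrix $$H=\begin{bmatrix}\gamma^2 I-R_1 & -S_1^\top & 0&\cdots&0\\ -S_1 & -Q_1-R_2 & -S_2^\top & \ddots&\vdots\\ 0& -S_2 & -Q_2-R_3 & \ddots & 0\\ \vdots&\ddots&\ddots&\ddots& -S_l^\top\\ 0&\cdots&0& -S_l & -Q_l-I\end{bmatrix}$$ is positive semidefinite. Then $\|\mathrm{CNN}_\theta(w_a^0)-\mathrm{CNN}_\theta(w_b^0)\|_2\le\gamma\|w_a^0-w_b^0\|_2$ for all inputs $w_a^0,w_b^0$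.
   Context: $\mathbb{S}^n$ denotes the real symmetric $n\times n$ matrices. The network consists of $l$ layers. Layers $\mathcal{G}_i$, $i=1,\dots,p$, map $\mathbb{R}^{c_{i-1}\times N_{i-1}}\to\mathbb{R}^{c_i\times N_i}$ and are each either a convolutional layer or a pooling layer; for a signal $w^i\in\mathbb{R}^{c_i\times N_i}$, $w^i_k\in\mathbb{R}^{c_i}$ denotes its $k$-th column (time step). A convolutional layer is $w_k^i=\phi_i\big(b_i+\sum_{j=0}^{\ell_i-1}K^i_j w^{i-1}_{k-j}\big)$ with kernels $K^i_j\in\mathbb{R}^{c_i\times c_{i-1}}$, bias $b_i\in\mathbb{R}^{c_i}$, zero padding ($w^{i-1}_m=0$ for indices before the start of the signal) and an element-wise activation $\phi_i$; a pooling layer is channel-wise average or maximum pooling over non-overlapping windows of length $\ell_i$ (kernel size = stride = $\ell_i$, $N_i=N_{i-1}/\ell_i$, $c_i=c_{i-1}$). $\mathcal{F}:\mathbb{R}^{c_p\times N_p}\to\mathbb{R}^{n_p}$, $n_p=c_pN_p$, is flattening (column-wise stacking). Layers $\mathcal{L}_i$, $i=p+1,\dots,l$, are fully connected: $w^i=\phi_i(W_iw^{i-1}+b_i)$ for $i<l$ and $w^l=W_lw^{l-1}+b_l$, with $W_i\in\mathbb{R}^{n_i\times n_{i-1}}$, $b_i\in\mathbb{R}^{n_i}$. For $i\le p$, $n_i:=c_iN_i$. For a signal $w^i$, $\underline{w}^i\in\mathbb{R}^{n_i}$ denotes its column-wise stacked vector if $w^i\in\mathbb{R}^{c_i\times N_i}$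 and $\underline{w}^i=w^i$ if $w^i\in\mathbb{R}^{n_i}$. The input is $w^0\in\mathbb{R}^{c_0\times N_0}$ and the norm $\|\cdot\|_2$ on matrices is the Euclidean norm of the stacked vector. *)

theory Defs
  imports "Jordan_Normal_Form.Matrix"
begin

definition vnorm :: "real vec \<Rightarrow> real" where
  "vnorm v = sqrt (v \<bullet> v)"

text \<open>Column-wise stacking of a signal w in R^(c x N) (rows = channels, columns = time steps):
  entry (ch, k) goes to position k * c + ch.\<close>
definition stack :: "real mat \<Rightarrow> real vec" where
  "stack w = vec (dim_row w * dim_col w) (\<lambda>j. w $$ (j mod dim_row w, j div dim_row w))"

definition unstack :: "nat \<Rightarrow> nat \<Rightarrow> real vec \<Rightarrow> real mat" where
  "unstack c N x = mat c N (\<lambda>(ch, k). x $ (k * c + ch))"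

definition mnorm :: "real mat \<Rightarrow> real" where
  "mnorm w = vnorm (stack w)"

definition psd :: "real mat \<Rightarrow> bool" where
  "psd M \<longleftrightarrow> dim_row M = dim_col M \<and> (\<forall>x \<in> carrier_vec (dim_row M). 0 \<le> x \<bullet> (M *\<^sub>v x))"

datatype layer_kind = Conv | AvgPool | MaxPool

record cnn =
  p :: nat                          \<comment> \<open>number of conv/pool layers\<close>
  l :: nat                          \<comment> \<open>total number of layers\<close>
  ch :: "nat \<Rightarrow> nat"
  len :: "nat \<Rightarrow> nat"
  dim :: "nat \<Rightarrow> nat"
  kind :: "nat \<Rightarrow> layer_kind"
  ker_len :: "nat \<Rightarrow> nat"           \<comment> \<open>l_i : kernel length / pooling window\<close>
  ker :: "nat \<Rightarrow> nat \<Rightarrow> real mat"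
  bias :: "nat \<Rightarrow> real vec"
  act :: "nat \<Rightarrow> real \<Rightarrow> real"
  weight :: "nat \<Rightarrow> real mat"

definition wf_cnn :: "cnn \<Rightarrow> bool" where
  "wf_cnn C \<longleftrightarrow> p C < l C
   \<and> (\<forall>i \<le> p C. dim C i = ch C i * len C i)
   \<and> (\<forall>i \<in> {1..p C}.
        (kind C i = Conv \<longrightarrow> 1 \<le> ker_len C i \<and> len C i = len C (i - 1)
             \<and> (\<forall>j < ker_len C i. ker C i j \<in> carrier_mat (ch C i) (ch C (i - 1)))
             \<and> bias C i \<in> carrier_vec (ch C i))
      \<and> (kind C i \<noteq> Conv \<longrightarrow> 1 \<le> ker_len C i \<and> ch C i = ch C (i - 1)
             \<and> len C (i - 1) = ker_len C i * len C i))
   \<and> (\<forall>i \<in> {p C + 1..l C}. weight C i \<in> carrier_mat (dim C i) (dim C (i - 1))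
             \<and> bias C i \<in> carrier_vec (dim C i))"

text \<open>Convolutional layer (0-based time index k; zero padding before the start):
  w^i_k = phi_i (b_i + sum_{j < l_i} K^i_j w^{i-1}_{k-j}).\<close>
definition conv_layer :: "cnn \<Rightarrow> nat \<Rightarrow> real mat \<Rightarrow> real mat" where
  "conv_layer C i w = mat (ch C i) (len C i) (\<lambda>(r, k).
     act C i (bias C i $ r + (\<Sum>j < ker_len C i. if j \<le> k then
        (\<Sum>d < ch C (i - 1). ker C i j $$ (r, d) * w $$ (d, k - j)) else 0)))"

definition avgpool_layer :: "cnn \<Rightarrow> nat \<Rightarrow> real mat \<Rightarrow> real mat" where
  "avgpool_layer C i w = mat (ch C i) (len C i) (\<lambda>(r, k).
     (\<Sum>j < ker_len C i. w $$ (r, k * ker_len C i + j)) / real (ker_len C i))"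

definition maxpool_layer :: "cnn \<Rightarrow> nat \<Rightarrow> real mat \<Rightarrow> real mat" where
  "maxpool_layer C i w = mat (ch C i) (len C i) (\<lambda>(r, k).
     Max ((\<lambda>j. w $$ (r, k * ker_len C i + j)) ` {..<ker_len C i}))"

definition G_layer :: "cnn \<Rightarrow> nat \<Rightarrow> real mat \<Rightarrow> real mat" where
  "G_layer C i w = (case kind C i of
       Conv \<Rightarrow> conv_layer C i w
     | AvgPool \<Rightarrow> avgpool_layer C i w
     | MaxPool \<Rightarrow> maxpool_layer C i w)"

text \<open>For i \<le> p this is G_i conjugated by (un)stacking; flattening F is the
  stacking itself, so for i > p the input of L_i is just the vector w^(i-1).\<close>
definition layer_vec :: "cnn \<Rightarrow> nat \<Rightarrow> real vec \<Rightarrow> real vec" where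
  "layer_vec C i x =
     (if i \<le> p C then stack (G_layer C i (unstack (ch C (i - 1)) (len C (i - 1)) x))
      else if i < l C then map_vec (act C i) (weight C i *\<^sub>v x + bias C i)
      else weight C i *\<^sub>v x + bias C i)"

fun net_upto :: "cnn \<Rightarrow> nat \<Rightarrow> real vec \<Rightarrow> real vec" where
  "net_upto C 0 x = x"
| "net_upto C (Suc i) x = layer_vec C (Suc i) (net_upto C i x)"

definition CNN :: "cnn \<Rightarrow> real mat \<Rightarrow> real vec" where
  "CNN C w0 = net_upto C (l C) (stack w0)"

definition blk_off :: "(nat \<Rightarrow> nat) \<Rightarrow> nat \<Rightarrow> nat" where
  "blk_off n i = (\<Sum>j < i. n j)"

definition blk_idx :: "(nat \<Rightarrow> nat) \<Rightarrow> nat \<Rightarrow> nat" where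
  "blk_idx n r = (LEAST i. r < blk_off n (Suc i))"

definition block_mat :: "(nat \<Rightarrow> nat) \<Rightarrow> nat \<Rightarrow> (nat \<Rightarrow> nat \<Rightarrow> real mat) \<Rightarrow> real mat" where
  "block_mat n m B = mat (blk_off n (Suc m)) (blk_off n (Suc m)) (\<lambda>(r, s).
     B (blk_idx n r) (blk_idx n s) $$ (r - blk_off n (blk_idx n r), s - blk_off n (blk_idx n s)))"

definition H_blocks :: "(nat \<Rightarrow> nat) \<Rightarrow> nat \<Rightarrow> real \<Rightarrow> (nat \<Rightarrow> real mat) \<Rightarrow> (nat \<Rightarrow> real mat)
     \<Rightarrow> (nat \<Rightarrow> real mat) \<Rightarrow> nat \<Rightarrow> nat \<Rightarrow> real mat" where
  "H_blocks n L \<gamma> Q S R i j =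
     (if i = j then
        (if i = 0 then \<gamma>\<^sup>2 \<cdot>\<^sub>m 1\<^sub>m (n 0) - R 1
         else if i = L then - Q L - 1\<^sub>m (n L)
         else - Q i - R (i + 1))
      else if i = j + 1 then - S i
      else if j = i + 1 then - transpose_mat (S j)
      else 0\<^sub>m (n i) (n j))"

definition H_mat :: "(nat \<Rightarrow> nat) \<Rightarrow> nat \<Rightarrow> real \<Rightarrow> (nat \<Rightarrow> real mat) \<Rightarrow> (nat \<Rightarrow> real mat)
     \<Rightarrow> (nat \<Rightarrow> real mat) \<Rightarrow> real mat" where
  "H_mat n L \<gamma> Q S R = block_mat n L (H_blocks n L \<gamma> Q S R)"

end

theory Submission
  imports Defs
begin


definition ent :: "real mat \<Rightarrow> real vec \<Rightarrow> real vec \<Rightarrow> nat \<Rightarrow> nat \<Rightarrow> real" where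
  "ent M x y n1 n2 = (\<Sum>a<n1. \<Sum>b<n2. x $ a * M $$ (a, b) * y $ b)"

lemma sum_split: "(\<Sum>r<x+y. G r) = (\<Sum>r<x. G r) + (\<Sum>a<y. G (x+a))"
  for G :: "nat \<Rightarrow> real"
  by (induction y) (auto simp: add.assoc)

lemma quad_entry:
  assumes "v \<in> carrier_vec N" "M \<in> carrier_mat N N"
  shows "v \<bullet> (M *\<^sub>v v) = ent M v v N N"
proof -
  have "v \<bullet> (M *\<^sub>v v) = (\<Sum>a<N. v $ a * (\<Sum>b<N. M $$ (a, b) * v $ b))"
    using assms unfolding scalar_prod_def
    by (intro sum.cong) (auto simp: atLeast0LessThan scalar_prod_def row_def)
  also have "\<dots> = ent M v v N N"
    unfolding ent_def by (simp add: sum_distrib_left mult.assoc)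
  finally show ?thesis .
qed

lemma blk_off_Suc[simp]: "blk_off n (Suc i) = blk_off n i + n i"
  by (simp add: blk_off_def)

lemma blk_off_0[simp]: "blk_off n 0 = 0"
  by (simp add: blk_off_def)

lemma blk_off_mono: "i \<le> j \<Longrightarrow> blk_off n i \<le> blk_off n j"
  unfolding blk_off_def by (rule sum_mono2) auto

lemma blk_idx_eq: assumes "a < n i" shows "blk_idx n (blk_off n i + a) = i"
  unfolding blk_idx_def
proof (rule Least_equality)
  show "blk_off n i + a < blk_off n (Suc i)" using assms by simp
  fix y assume y: "blk_off n i + a < blk_off n (Suc y)"
  show "i \<le> y"
  proof (rule ccontr)
    assume "\<not> i \<le> y" then have "Suc y \<le> i" by simp
    then have "blk_off n (Suc y) \<le> blk_off n i" by (rule blk_off_mono)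
    with y show False by simp
  qed
qed

lemma sum_blocks: "(\<Sum>r<blk_off n (Suc m). G r) = (\<Sum>i\<le>m. \<Sum>a<n i. G (blk_off n i + a))"
  for G :: "nat \<Rightarrow> real"
proof (induction m)
  case 0 then show ?case by simp
next
  case (Suc m)
  have "(\<Sum>r<blk_off n (Suc (Suc m)). G r) = (\<Sum>r<blk_off n (Suc m). G r) + (\<Sum>a<n (Suc m). G (blk_off n (Suc m) + a))"
    by (simp only: blk_off_Suc[of n "Suc m"] sum_split)
  with Suc show ?case by simp
qed

lemma block_quad:
  assumes D: "\<forall>i\<le>m. D i \<in> carrier_vec (n i)"
  defines "v \<equiv> vec (blk_off n (Suc m)) (\<lambda>r. D (blk_idx n r) $ (r - blk_off n (blk_idx n r)))"
  shows "v \<in> carrier_vec (blk_off n (Suc m))"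
    and "v \<bullet> (block_mat n m B *\<^sub>v v) = (\<Sum>i\<le>m. \<Sum>j\<le>m. ent (B i j) (D i) (D j) (n i) (n j))"
proof -
  let ?N = "blk_off n (Suc m)"
  let ?M = "block_mat n m B"
  show vc: "v \<in> carrier_vec ?N" unfolding v_def by simp
  have Mc: "?M \<in> carrier_mat ?N ?N" unfolding block_mat_def by simp
  have lt: "blk_off n i + a < ?N" if "i \<le> m" "a < n i" for i a
  proof -
    have "blk_off n i + a < blk_off n (Suc i)" using that by simp
    also have "\<dots> \<le> ?N" using that by (intro blk_off_mono) simp
    finally show ?thesis .
  qed
  have vi: "v $ (blk_off n i + a) = D i $ a" if "i \<le> m" "a < n i" for i a
    using lt[OF that] blk_idx_eq[of a n i, OF that(2)] unfolding v_def by simp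
  have Mi: "?M $$ (blk_off n i + a, blk_off n j + b) = B i j $$ (a, b)"
    if "i \<le> m" "a < n i" "j \<le> m" "b < n j" for i a j b
    using lt[OF that(1,2)] lt[OF that(3,4)] blk_idx_eq[of a n i, OF that(2)] blk_idx_eq[of b n j, OF that(4)]
    unfolding block_mat_def by simp
  have "v \<bullet> (?M *\<^sub>v v) = ent ?M v v ?N ?N" by (rule quad_entry[OF vc Mc])
  also have "\<dots> = (\<Sum>i\<le>m. \<Sum>a<n i. \<Sum>j\<le>m. \<Sum>b<n j.
      v $ (blk_off n i + a) * ?M $$ (blk_off n i + a, blk_off n j + b) * v $ (blk_off n j + b))"
    unfolding ent_def by (simp only: sum_blocks)
  also have "\<dots> = (\<Sum>i\<le>m. \<Sum>a<n i. \<Sum>j\<le>m. \<Sum>b<n j. D i $ a * B i j $$ (a, b) * D j $ b)"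
    by (intro sum.cong refl) (simp add: vi Mi)
  also have "\<dots> = (\<Sum>i\<le>m. \<Sum>j\<le>m. ent (B i j) (D i) (D j) (n i) (n j))"
    unfolding ent_def by (rule sum.cong[OF refl], rule sum.swap)
  finally show "v \<bullet> (?M *\<^sub>v v) = (\<Sum>i\<le>m. \<Sum>j\<le>m. ent (B i j) (D i) (D j) (n i) (n j))" .
qed



lemma four_quad:
  assumes u: "u \<in> carrier_vec n1" and w: "w \<in> carrier_vec n2"
    and Q: "Q \<in> carrier_mat n1 n1" and S: "S \<in> carrier_mat n1 n2" and R: "R \<in> carrier_mat n2 n2"
  shows "(u @\<^sub>v w) \<bullet> (four_block_mat Q S (transpose_mat S) R *\<^sub>v (u @\<^sub>v w))
    = ent Q u u n1 n1 + 2 * ent S u w n1 n2 + ent R w w n2 n2"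
proof -
  let ?M = "four_block_mat Q S (transpose_mat S) R"
  let ?z = "u @\<^sub>v w"
  have zc: "?z \<in> carrier_vec (n1 + n2)" using u w by auto
  have Mc: "?M \<in> carrier_mat (n1 + n2) (n1 + n2)" using Q R by auto
  have "?z \<bullet> (?M *\<^sub>v ?z) = ent ?M ?z ?z (n1+n2) (n1+n2)" by (rule quad_entry[OF zc Mc])
  also have "\<dots> = ent Q u u n1 n1 + ent S u w n1 n2 + ent (transpose_mat S) w u n2 n1 + ent R w w n2 n2"
    using u w Q S R unfolding ent_def
    by (simp add: sum_split sum.distrib)
  also have "ent (transpose_mat S) w u n2 n1 = ent S u w n1 n2"
    using S unfolding ent_def by (subst sum.swap) (intro sum.cong refl, auto)
  finally show ?thesis by simp
qed

lemma ent_diag: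
  assumes x: "x \<in> carrier_vec k"
    and M: "\<And>a b. a < k \<Longrightarrow> b < k \<Longrightarrow> M $$ (a, b) = c * (if a = b then 1 else 0) + e1 * M1 $$ (a, b) + e2 * M2 $$ (a, b)"
  shows "ent M x x k k = c * (x \<bullet> x) + e1 * ent M1 x x k k + e2 * ent M2 x x k k"
proof -
  have "ent M x x k k = (\<Sum>a<k. \<Sum>b<k. (if a = b then c * (x $ a * x $ b) else 0) + e1 * (x $ a * M1 $$ (a, b) * x $ b) + e2 * (x $ a * M2 $$ (a, b) * x $ b))"
    unfolding ent_def by (intro sum.cong refl) (simp add: M algebra_simps)
  also have "\<dots> = c * (x \<bullet> x) + e1 * ent M1 x x k k + e2 * ent M2 x x k k"
    using x unfolding ent_def scalar_prod_def
    by (simp add: sum.distrib sum_distrib_left atLeast0LessThan)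
  finally show ?thesis .
qed

lemma ent_off:
  assumes M: "\<And>a b. a < k1 \<Longrightarrow> b < k2 \<Longrightarrow> M $$ (a, b) = e * M1 $$ (a, b)"
  shows "ent M x y k1 k2 = e * ent M1 x y k1 k2"
  unfolding ent_def by (simp add: M sum_distrib_left algebra_simps)

lemma ent_offT:
  assumes M: "\<And>a b. a < k1 \<Longrightarrow> b < k2 \<Longrightarrow> M $$ (a, b) = e * M1 $$ (b, a)"
  shows "ent M x y k1 k2 = e * ent M1 y x k2 k1"
  unfolding ent_def by (subst sum.swap) (simp add: M sum_distrib_left algebra_simps)



lemma wf_dim: "wf_cnn C \<Longrightarrow> i \<le> p C \<Longrightarrow> dim C i = ch C i * len C i"
  unfolding wf_cnn_def by blast

lemma wf_pl: "wf_cnn C \<Longrightarrow> p C < l C"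
  unfolding wf_cnn_def by blast

lemma wf_weight: "wf_cnn C \<Longrightarrow> i \<in> {p C + 1..l C} \<Longrightarrow>
   weight C i \<in> carrier_mat (dim C i) (dim C (i - 1)) \<and> bias C i \<in> carrier_vec (dim C i)"
  unfolding wf_cnn_def by blast

lemma stack_carrier: "w \<in> carrier_mat c N \<Longrightarrow> stack w \<in> carrier_vec (c * N)"
  unfolding stack_def carrier_mat_def carrier_vec_def by simp

lemma G_carrier: "G_layer C i y \<in> carrier_mat (ch C i) (len C i)"
  unfolding G_layer_def conv_layer_def avgpool_layer_def maxpool_layer_def
  by (cases "kind C i") (simp_all only: layer_kind.case mat_carrier)

lemma layer_dim:
  assumes wf: "wf_cnn C" and i: "1 \<le> i" "i \<le> l C"
  shows "layer_vec C i x \<in> carrier_vec (dim C i)"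
proof (cases "i \<le> p C")
  case True
  have "layer_vec C i x = stack (G_layer C i (unstack (ch C (i - 1)) (len C (i - 1)) x))"
    using True unfolding layer_vec_def by simp
  also have "\<dots> \<in> carrier_vec (ch C i * len C i)" by (rule stack_carrier[OF G_carrier])
  finally show ?thesis using wf_dim[OF wf True] by simp
next
  case False
  then have "i \<in> {p C + 1..l C}" using i by auto
  then have "weight C i \<in> carrier_mat (dim C i) (dim C (i - 1))" "bias C i \<in> carrier_vec (dim C i)"
    using wf_weight[OF wf] by auto
  then show ?thesis using False unfolding layer_vec_def carrier_vec_def carrier_mat_def by simp
qed

lemma net_dim:
  assumes wf: "wf_cnn C" and x: "x \<in> carrier_vec (dim C 0)"
  shows "i \<le> l C \<Longrightarrow> net_upto C i x \<in> carrier_vec (dim C i)"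
proof (induction i)
  case 0 then show ?case using x by simp
next
  case (Suc i) then show ?case using layer_dim[OF wf, of "Suc i"] by simp
qed

lemma stack_minus:
  assumes "wa \<in> carrier_mat c N" "wb \<in> carrier_mat c N"
  shows "stack (wa - wb) = stack wa - stack wb"
proof (rule eq_vecI)
  show "dim_vec (stack (wa - wb)) = dim_vec (stack wa - stack wb)"
    using assms unfolding stack_def by auto
  fix j assume "j < dim_vec (stack wa - stack wb)"
  then have j: "j < c * N" using assms unfolding stack_def by auto
  then have c: "c > 0" by (cases c) auto
  have "j mod c < c" using c by simp
  moreover have "j div c < N" using j c by (simp add: div_less_iff_less_mult mult.commute)
  moreover have "dim_row wa = c" "dim_col wa = N" "dim_row wb = c" "dim_col wb = N"
    using assms by auto
  ultimately show "stack (wa - wb) $ j = (stack wa - stack wb) $ j"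
    using j unfolding stack_def by simp
qed



theorem theorem1:
  fixes C :: cnn and \<gamma> :: real
    and Q S R :: "nat \<Rightarrow> real mat"
  assumes wf: "wf_cnn C"
    and gamma_pos: "\<gamma> > 0"
    and Q_sym: "\<forall>i \<in> {1..l C}. Q i \<in> carrier_mat (dim C i) (dim C i) \<and> transpose_mat (Q i) = Q i"
    and S_dim: "\<forall>i \<in> {1..l C}. S i \<in> carrier_mat (dim C i) (dim C (i - 1))"
    and R_sym: "\<forall>i \<in> {1..l C}. R i \<in> carrier_mat (dim C (i - 1)) (dim C (i - 1)) \<and> transpose_mat (R i) = R i"
    and QC: "\<forall>i \<in> {1..l C}. \<forall>xa \<in> carrier_vec (dim C (i - 1)). \<forall>xb \<in> carrier_vec (dim C (i - 1)).
              0 \<le> ((layer_vec C i xa - layer_vec C i xb) @\<^sub>v (xa - xb)) \<bullet>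
                   (four_block_mat (Q i) (S i) (transpose_mat (S i)) (R i)
                      *\<^sub>v ((layer_vec C i xa - layer_vec C i xb) @\<^sub>v (xa - xb)))"
    and H_psd: "psd (H_mat (dim C) (l C) \<gamma> Q S R)"
  shows "\<forall>wa \<in> carrier_mat (ch C 0) (len C 0). \<forall>wb \<in> carrier_mat (ch C 0) (len C 0).
           vnorm (CNN C wa - CNN C wb) \<le> \<gamma> * mnorm (wa - wb)"
proof (intro ballI)
  fix wa wb :: "real mat" assume wa: "wa \<in> carrier_mat (ch C 0) (len C 0)" and wb: "wb \<in> carrier_mat (ch C 0) (len C 0)"
  define n where "n = dim C"
  define L where "L = l C"
  have L1: "1 \<le> L" using wf_pl[OF wf] unfolding L_def by simp
  have n0: "n 0 = ch C 0 * len C 0" unfolding n_def using wf_dim[OF wf, of 0] by simp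
  define xa where "xa = stack wa"
  define xb where "xb = stack wb"
  have xa: "xa \<in> carrier_vec (dim C 0)" using stack_carrier[OF wa] n0 unfolding xa_def n_def by simp
  have xb: "xb \<in> carrier_vec (dim C 0)" using stack_carrier[OF wb] n0 unfolding xb_def n_def by simp
  define d where "d i = net_upto C i xa - net_upto C i xb" for i
  have dc: "d i \<in> carrier_vec (n i)" if "i \<le> L" for i
    using net_dim[OF wf xa, of i] net_dim[OF wf xb, of i] that unfolding d_def n_def L_def by auto
  have Qc: "Q k \<in> carrier_mat (n k) (n k)" if "1 \<le> k" "k \<le> L" for k
    using Q_sym that unfolding n_def L_def by auto
  have Sc: "S k \<in> carrier_mat (n k) (n (k - 1))" if "1 \<le> k" "k \<le> L" for k
    using S_dim that unfolding n_def L_def by auto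
  have Rc: "R k \<in> carrier_mat (n (k - 1)) (n (k - 1))" if "1 \<le> k" "k \<le> L" for k
    using R_sym that unfolding n_def L_def by auto
  define qQ where "qQ k = ent (Q k) (d k) (d k) (n k) (n k)" for k
  define sS where "sS k = ent (S k) (d k) (d (k - 1)) (n k) (n (k - 1))" for k
  define qR where "qR k = ent (R k) (d (k - 1)) (d (k - 1)) (n (k - 1)) (n (k - 1))" for k
  have layer_ineq: "0 \<le> qQ k + 2 * sS k + qR k" if k: "1 \<le> k" "k \<le> L" for k
  proof -
    obtain k' where k': "k = Suc k'" using k by (cases k) auto
    have ya: "net_upto C k' xa \<in> carrier_vec (dim C (k - 1))"
      using net_dim[OF wf xa, of k'] k k' unfolding L_def by simp
    have yb: "net_upto C k' xb \<in> carrier_vec (dim C (k - 1))"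
      using net_dim[OF wf xb, of k'] k k' unfolding L_def by simp
    have kin: "k \<in> {1..l C}" using k unfolding L_def by simp
    have "0 \<le> ((layer_vec C k (net_upto C k' xa) - layer_vec C k (net_upto C k' xb)) @\<^sub>v (net_upto C k' xa - net_upto C k' xb)) \<bullet>
                   (four_block_mat (Q k) (S k) (transpose_mat (S k)) (R k)
                      *\<^sub>v ((layer_vec C k (net_upto C k' xa) - layer_vec C k (net_upto C k' xb)) @\<^sub>v (net_upto C k' xa - net_upto C k' xb)))"
      using QC kin ya yb by blast
    also have "(layer_vec C k (net_upto C k' xa) - layer_vec C k (net_upto C k' xb)) = d k"
      unfolding d_def k' by simp
    also have "net_upto C k' xa - net_upto C k' xb = d (k - 1)"
      unfolding d_def k' by simp
    also have "(d k @\<^sub>v d (k - 1)) \<bullet> (four_block_mat (Q k) (S k) (transpose_mat (S k)) (R k) *\<^sub>v (d k @\<^sub>v d (k - 1)))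
       = qQ k + 2 * sS k + qR k"
      unfolding qQ_def sS_def qR_def
      by (rule four_quad[OF dc dc Qc Sc Rc]) (use k in auto)
    finally show ?thesis .
  qed
  define diag where "diag i = (if i = 0 then \<gamma>\<^sup>2 * (d 0 \<bullet> d 0) else 0) - (if i = L then d L \<bullet> d L else 0)
     - (if 0 < i then qQ i else 0) - (if i < L then qR (i + 1) else 0)" for i
  define HB where "HB = H_blocks n L \<gamma> Q S R"
  have T: "ent (HB i j) (d i) (d j) (n i) (n j) = (if i = j then diag i else 0)
     + (if i = j + 1 then - sS i else 0) + (if j = i + 1 then - sS j else 0)"
    if ij: "i \<le> L" "j \<le> L" for i j
  proof -
    consider (d0) "i = j" "i = 0" | (dL) "i = j" "i = L" "i \<noteq> 0" | (dm) "i = j" "0 < i" "i < L"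
      | (lo) "i = j + 1" | (up) "j = i + 1" | (z) "i \<noteq> j" "i \<noteq> j + 1" "j \<noteq> i + 1"
      using ij by linarith
    then show ?thesis
    proof cases
      case d0
      have R1: "R 1 \<in> carrier_mat (n 0) (n 0)" using Rc[of 1] L1 by simp
      have HB: "HB 0 0 = \<gamma>\<^sup>2 \<cdot>\<^sub>m 1\<^sub>m (n 0) - R 1" unfolding HB_def H_blocks_def by simp
      have "ent (HB 0 0) (d 0) (d 0) (n 0) (n 0) = \<gamma>\<^sup>2 * (d 0 \<bullet> d 0) + (-1) * ent (R 1) (d 0) (d 0) (n 0) (n 0) + 0 * ent (R 1) (d 0) (d 0) (n 0) (n 0)"
        unfolding HB by (rule ent_diag[OF dc]) (use R1 L1 in auto)
      then show ?thesis using d0 L1 unfolding diag_def qR_def by simp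
    next
      case dL
      have QL: "Q L \<in> carrier_mat (n L) (n L)" using Qc[of L] L1 by simp
      have HB: "HB L L = - Q L - 1\<^sub>m (n L)" using dL unfolding HB_def H_blocks_def by simp
      have "ent (HB L L) (d L) (d L) (n L) (n L) = (-1) * (d L \<bullet> d L) + (-1) * ent (Q L) (d L) (d L) (n L) (n L) + 0 * ent (Q L) (d L) (d L) (n L) (n L)"
        unfolding HB by (rule ent_diag[OF dc]) (use QL in auto)
      then show ?thesis using dL L1 unfolding diag_def qQ_def by simp
    next
      case dm
      have Qi: "Q i \<in> carrier_mat (n i) (n i)" using Qc[of i] dm by simp
      have Ri: "R (i + 1) \<in> carrier_mat (n i) (n i)" using Rc[of "i + 1"] dm by simp
      have HB: "HB i i = - Q i - R (i + 1)" using dm unfolding HB_def H_blocks_def by simp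
      have "ent (HB i i) (d i) (d i) (n i) (n i) = 0 * (d i \<bullet> d i) + (-1) * ent (Q i) (d i) (d i) (n i) (n i) + (-1) * ent (R (i + 1)) (d i) (d i) (n i) (n i)"
        unfolding HB by (rule ent_diag[OF dc]) (use Qi Ri dm in auto)
      then show ?thesis using dm unfolding diag_def qQ_def qR_def by simp
    next
      case lo
      have Si: "S i \<in> carrier_mat (n i) (n j)" using Sc[of i] lo ij by simp
      have HB: "HB i j = - S i" using lo unfolding HB_def H_blocks_def by simp
      have "ent (HB i j) (d i) (d j) (n i) (n j) = (-1) * ent (S i) (d i) (d j) (n i) (n j)"
        unfolding HB by (rule ent_off) (use Si in auto)
      then show ?thesis using lo unfolding sS_def by simp
    next
      case up
      have Sj: "S j \<in> carrier_mat (n j) (n i)" using Sc[of j] up ij by simp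
      have HB: "HB i j = - transpose_mat (S j)" using up unfolding HB_def H_blocks_def by simp
      have "ent (HB i j) (d i) (d j) (n i) (n j) = (-1) * ent (S j) (d j) (d i) (n j) (n i)"
        unfolding HB by (rule ent_offT) (use Sj in auto)
      then show ?thesis using up unfolding sS_def by simp
    next
      case z
      have HB: "HB i j = 0\<^sub>m (n i) (n j)" using z unfolding HB_def H_blocks_def by simp
      have "ent (HB i j) (d i) (d j) (n i) (n j) = 0 * ent (HB i j) (d i) (d j) (n i) (n j)"
        by (rule ent_off) (simp add: HB)
      then show ?thesis using z by simp
    qed
  qed
  define v where "v = vec (blk_off n (Suc L)) (\<lambda>r. d (blk_idx n r) $ (r - blk_off n (blk_idx n r)))"
  have dall: "\<forall>i\<le>L. d i \<in> carrier_vec (n i)" using dc by blast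
  have vc: "v \<in> carrier_vec (blk_off n (Suc L))"
    using block_quad(1)[OF dall] unfolding v_def .
  have vH: "v \<bullet> (block_mat n L HB *\<^sub>v v) = (\<Sum>i\<le>L. \<Sum>j\<le>L. ent (HB i j) (d i) (d j) (n i) (n j))"
    using block_quad(2)[OF dall] unfolding v_def .
  have "0 \<le> v \<bullet> (block_mat n L HB *\<^sub>v v)"
    using H_psd vc unfolding psd_def H_mat_def HB_def n_def L_def block_mat_def by simp
  also have "\<dots> = (\<Sum>i\<le>L. \<Sum>j\<le>L. (if i = j then diag i else 0)
     + (if i = j + 1 then - sS i else 0) + (if j = i + 1 then - sS j else 0))"
    unfolding vH by (intro sum.cong refl T) auto
  also have "\<dots> = (\<Sum>i\<le>L. diag i + (if 0 < i then - sS i else 0) + (if i < L then - sS (i + 1) else 0))"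
  proof (intro sum.cong refl)
    fix i assume i: "i \<in> {..L}"
    have 1: "(\<Sum>j\<le>L. (if i = j then diag i else 0)) = diag i" using i by simp
    have 2: "(\<Sum>j\<le>L. (if i = j + 1 then - sS i else 0)) = (if 0 < i then - sS i else 0)"
    proof (cases i)
      case 0 then show ?thesis by simp
    next
      case (Suc i')
      have "(\<Sum>j\<le>L. (if i = j + 1 then - sS i else 0)) = (\<Sum>j\<le>L. (if j = i' then - sS i else 0))"
        using Suc by (intro sum.cong refl) auto
      also have "\<dots> = - sS i" using Suc i by simp
      finally show ?thesis using Suc by simp
    qed
    have 3: "(\<Sum>j\<le>L. (if j = i + 1 then - sS j else 0)) = (if i < L then - sS (i + 1) else 0)"
      by simp
    show "(\<Sum>j\<le>L. (if i = j then diag i else 0) + (if i = j + 1 then - sS i else 0) + (if j = i + 1 then - sS j else 0))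
      = diag i + (if 0 < i then - sS i else 0) + (if i < L then - sS (i + 1) else 0)"
      by (simp only: sum.distrib 1 2 3)
  qed
  also have "\<dots> = \<gamma>\<^sup>2 * (d 0 \<bullet> d 0) - d L \<bullet> d L - (\<Sum>k\<in>{1..L}. qQ k + 2 * sS k + qR k)"
  proof -
    have s1: "(\<Sum>i\<le>L. (if 0 < i then f i else 0)) = (\<Sum>k\<in>{1..L}. f k)" for f :: "nat \<Rightarrow> real"
    proof -
      have "(\<Sum>i\<le>L. (if 0 < i then f i else 0)) = (\<Sum>i\<in>{x\<in>{..L}. 0 < x}. f i)"
        by (rule sum.inter_filter[symmetric]) simp
      also have "{x\<in>{..L}. 0 < x} = {1..L}" by auto
      finally show ?thesis .
    qed
    have s2: "(\<Sum>i\<le>L. (if i < L then f (i + 1) else 0)) = (\<Sum>k\<in>{1..L}. f k)" for f :: "nat \<Rightarrow> real"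
    proof -
      have "(\<Sum>i\<le>L. (if i < L then f (i + 1) else 0)) = (\<Sum>i\<in>{x\<in>{..L}. x < L}. f (i + 1))"
        by (rule sum.inter_filter[symmetric]) simp
      also have "{x\<in>{..L}. x < L} = {0..<L}" by auto
      also have "(\<Sum>i\<in>{0..<L}. f (i + 1)) = (\<Sum>k\<in>{Suc 0..<Suc L}. f k)"
        unfolding sum.shift_bounds_Suc_ivl by simp
      also have "{Suc 0..<Suc L} = {1..L}" by auto
      finally show ?thesis .
    qed
    have ng: "\<And>P (a::real). (if P then - a else 0) = - (if P then a else 0)" by simp
    have s3: "(\<Sum>i\<le>L. (if i = c then f i else 0)) = f c" if "c \<le> L" for f :: "nat \<Rightarrow> real" and c
      using that by simp
    have "(\<Sum>i\<le>L. diag i + (if 0 < i then - sS i else 0) + (if i < L then - sS (i + 1) else 0))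
       = (\<Sum>i\<le>L. (if i = 0 then \<gamma>\<^sup>2 * (d 0 \<bullet> d 0) else 0)) - (\<Sum>i\<le>L. (if i = L then d L \<bullet> d L else 0))
         - (\<Sum>i\<le>L. (if 0 < i then qQ i else 0)) - (\<Sum>i\<le>L. (if i < L then qR (i + 1) else 0))
         - (\<Sum>i\<le>L. (if 0 < i then sS i else 0)) - (\<Sum>i\<le>L. (if i < L then sS (i + 1) else 0))"
      unfolding diag_def by (simp add: ng sum.distrib sum_subtractf sum_negf)
    also have "\<dots> = \<gamma>\<^sup>2 * (d 0 \<bullet> d 0) - d L \<bullet> d L - (\<Sum>k\<in>{1..L}. qQ k) - (\<Sum>k\<in>{1..L}. qR k)
         - (\<Sum>k\<in>{1..L}. sS k) - (\<Sum>k\<in>{1..L}. sS k)"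
      by (simp only: s1 s2 s3[of 0] s3[of L] order_refl le0)
    also have "\<dots> = \<gamma>\<^sup>2 * (d 0 \<bullet> d 0) - d L \<bullet> d L - (\<Sum>k\<in>{1..L}. qQ k + 2 * sS k + qR k)"
      by (simp add: sum.distrib sum_distrib_left[symmetric])
    finally show ?thesis .
  qed
  finally have "0 \<le> \<gamma>\<^sup>2 * (d 0 \<bullet> d 0) - d L \<bullet> d L - (\<Sum>k\<in>{1..L}. qQ k + 2 * sS k + qR k)" .
  moreover have "0 \<le> (\<Sum>k\<in>{1..L}. qQ k + 2 * sS k + qR k)"
    by (rule sum_nonneg) (use layer_ineq in auto)
  ultimately have ineq: "d L \<bullet> d L \<le> \<gamma>\<^sup>2 * (d 0 \<bullet> d 0)" by linarith
  have "CNN C wa - CNN C wb = d L" unfolding CNN_def d_def L_def xa_def xb_def by simp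
  moreover have "stack (wa - wb) = d 0" unfolding d_def xa_def xb_def using stack_minus[OF wa wb] by simp
  ultimately have e: "vnorm (CNN C wa - CNN C wb) = sqrt (d L \<bullet> d L)" "mnorm (wa - wb) = sqrt (d 0 \<bullet> d 0)"
    unfolding vnorm_def mnorm_def by simp_all
  have "sqrt (d L \<bullet> d L) \<le> sqrt (\<gamma>\<^sup>2 * (d 0 \<bullet> d 0))" using ineq by (rule real_sqrt_le_mono)
  also have "\<dots> = \<gamma> * sqrt (d 0 \<bullet> d 0)" using gamma_pos by (simp add: real_sqrt_mult)
  finally show "vnorm (CNN C wa - CNN C wb) \<le> \<gamma> * mnorm (wa - wb)" using e by simp
qed


end
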